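(* Let $S\subset\mathbb R^2$ be a finite set of $n>4$ points, none of which lies at the center of SED$(S)$. If $S$ is Pre-regular, then every internal angle of the convex hull of $S$ is strictly greater than $\pi(n-3)/n$.
   Context: SED$(S)$ is the smallest closed disk containing $S$. $S$ is \emph{Pre-regular} if there is a regular $n$-gon $P$ (the supporting polygon) such that for every pair of adjacent edges of $P$, one of the two edges contains exactly two points of $S$ (possibly at its endpoints) and the relative interior of the other edge contains no point of $S$. *)

theory Defs
  imports "HOL-Analysis.Analysis"
begin

text \<open>The plane R^2 is modelled by the type complex (a real inner product space).\<close>

definition is_SED :: "complex set \<Rightarrow> complex \<Rightarrow> real \<Rightarrow> bool" where
  "is_SED S c r \<longleftrightarrow> S \<subseteq> cball c r \<and> (\<forall>c' r'. S \<subseteq> cball c' r' \<longrightarrow> r \<le> r')"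

definition reg_vertex :: "complex \<Rightarrow> real \<Rightarrow> real \<Rightarrow> nat \<Rightarrow> nat \<Rightarrow> complex" where
  "reg_vertex c rho theta n k = c + complex_of_real rho * cis (theta + 2 * pi * real k / real n)"

definition reg_edge :: "complex \<Rightarrow> real \<Rightarrow> real \<Rightarrow> nat \<Rightarrow> nat \<Rightarrow> complex set" where
  "reg_edge c rho theta n k =
     closed_segment (reg_vertex c rho theta n k) (reg_vertex c rho theta n ((k + 1) mod n))"

definition reg_edge_relint :: "complex \<Rightarrow> real \<Rightarrow> real \<Rightarrow> nat \<Rightarrow> nat \<Rightarrow> complex set" where
  "reg_edge_relint c rho theta n k =
     open_segment (reg_vertex c rho theta n k) (reg_vertex c rho theta n ((k + 1) mod n))"

definition pre_regular :: "complex set \<Rightarrow> bool" where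
  "pre_regular S \<longleftrightarrow> (let n = card S in
     \<exists>c rho theta. rho > 0 \<and>
       (\<forall>k<n. let k' = (k + 1) mod n in
          (card (S \<inter> reg_edge c rho theta n k) = 2 \<and> S \<inter> reg_edge_relint c rho theta n k' = {}) \<or>
          (card (S \<inter> reg_edge c rho theta n k') = 2 \<and> S \<inter> reg_edge_relint c rho theta n k = {})))"

definition vec_angle :: "complex \<Rightarrow> complex \<Rightarrow> real" where
  "vec_angle x y = arccos ((x \<bullet> y) / (norm x * norm y))"

definition hull_internal_angle :: "complex set \<Rightarrow> complex \<Rightarrow> real \<Rightarrow> bool" where
  "hull_internal_angle S v alpha \<longleftrightarrow>
     (\<exists>u w. v extreme_point_of (convex hull S) \<and> u \<noteq> v \<and> w \<noteq> v \<and> u \<noteq> w \<and>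
        closed_segment v u face_of (convex hull S) \<and>
        closed_segment v w face_of (convex hull S) \<and>
        alpha = vec_angle (u - v) (w - v))"

end

theory Submission
  imports Defs
begin



lemma inner_cnj: "(a::complex) \<bullet> b = Re (cnj a * b)"
  by (simp add: inner_complex_def)

lemma vec_angle_div:
  assumes "a \<noteq> 0"
  shows "vec_angle a b = arccos (Re (b / a) / cmod (b / a))"
proof -
  have na: "cmod a > 0" using assms by simp
  have sq: "(cmod a)^2 = Re a * Re a + Im a * Im a" using cmod_power2[of a] by (simp add: power2_eq_square)
  have "Re (b/a) = (Re b * Re a + Im b * Im a) / (Re a * Re a + Im a * Im a)"
    by (simp add: Re_divide power2_eq_square)
  also have "\<dots> = (a \<bullet> b) / (cmod a)^2" by (simp add: sq inner_complex_def algebra_simps)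
  finally have 1: "Re (b/a) = (a \<bullet> b) / (cmod a)^2" .
  have 2: "cmod (b/a) = cmod b / cmod a" by (simp add: norm_divide)
  have "Re (b / a) / cmod (b / a) = (a \<bullet> b) / (cmod a * cmod b)"
    unfolding 1 2 using na by (simp add: power2_eq_square field_simps)
  then show ?thesis unfolding vec_angle_def by simp
qed

lemma polar: "z = complex_of_real (cmod z) * cis (Arg z)"
  by (metis rcis_cmod_Arg rcis_def)

lemma Re_over: "z \<noteq> 0 \<Longrightarrow> Re z / cmod z = cos (Arg z)"
proof -
  assume "z \<noteq> 0"
  have "Re z = cmod z * cos (Arg z)" by (subst polar[of z]) simp
  then show ?thesis using \<open>z \<noteq> 0\<close> by simp
qed

lemma Im_polar: "Im z = cmod z * sin (Arg z)"
  by (subst polar[of z]) simp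

lemma sin_pos_imp: "-pi < x \<Longrightarrow> sin x > 0 \<Longrightarrow> 0 < x"
proof (rule ccontr)
  assume "-pi < x" "sin x > 0" "\<not> 0 < x"
  then have "sin (-x) \<ge> 0" by (intro sin_ge_zero) auto
  then show False using \<open>sin x > 0\<close> by simp
qed

lemma sin_nonneg_imp: "-pi < x \<Longrightarrow> sin x \<ge> 0 \<Longrightarrow> 0 \<le> x"
proof (rule ccontr)
  assume "-pi < x" "sin x \<ge> 0" "\<not> 0 \<le> x"
  then have "sin (-x) > 0" by (intro sin_gt_zero) auto
  then show False using \<open>sin x \<ge> 0\<close> by simp
qed

lemma polar_mult_cis: "z * cis b = complex_of_real (cmod z) * cis (Arg z + b)"
  by (subst polar[of z]) (simp add: cis_mult mult.assoc)

lemma ang_gt: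
  fixes z :: complex
  assumes "0 < \<beta>" "\<beta> < pi" "Im z \<ge> 0" "Im (z * cis (-\<beta>)) > 0"
  shows "Re z / cmod z < cos \<beta>"
proof -
  have z0: "z \<noteq> 0" using assms(4) by auto
  define \<phi> where "\<phi> = Arg z"
  have b: "-pi < \<phi>" "\<phi> \<le> pi" using Arg_bounded \<phi>_def by auto
  have "sin \<phi> \<ge> 0" using assms(3) z0 Im_polar[of z] \<phi>_def by (simp add: zero_le_mult_iff)
  then have p0: "0 \<le> \<phi>" using b sin_nonneg_imp by auto
  have "Im (z * cis (-\<beta>)) = cmod z * sin (\<phi> - \<beta>)" using polar_mult_cis[of z "-\<beta>"] by (simp add: \<phi>_def)
  then have "sin (\<phi> - \<beta>) > 0" using assms(4) z0 by (simp add: zero_less_mult_iff)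
  then have "\<phi> - \<beta> > 0" using sin_pos_imp[of "\<phi> - \<beta>"] p0 assms(2) by auto
  then have "cos \<phi> < cos \<beta>" using cos_monotone_0_pi[of \<beta> \<phi>] assms b by auto
  then show ?thesis using Re_over[OF z0] \<phi>_def by simp
qed


lemma ang_gt':
  fixes z :: complex
  assumes "0 < \<beta>" "\<beta> < pi" "Im z \<le> 0" "Im (z * cis \<beta>) < 0"
  shows "Re z / cmod z < cos \<beta>"
proof -
  have "Im (cnj z * cis (-\<beta>)) = - Im (z * cis \<beta>)" by simp
  then have "Re (cnj z) / cmod (cnj z) < cos \<beta>"
    using assms by (intro ang_gt) auto
  then show ?thesis by simp
qed


lemma vec_angle_gt:
  assumes "a \<noteq> 0" "Re (b/a) / cmod (b/a) < cos \<beta>" "0 \<le> \<beta>" "\<beta> \<le> pi"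
  shows "vec_angle a b > \<beta>"
proof -
  have "-1 \<le> Re (b/a) / cmod (b/a)"
  proof (cases "b/a = 0")
    case False
    then have "cmod (b/a) > 0" by simp
    moreover have "- cmod (b/a) \<le> Re (b/a)" using abs_Re_le_cmod[of "b/a"] by linarith
    ultimately show ?thesis by (simp add: field_simps)
  qed auto
  then have "arccos (cos \<beta>) < arccos (Re (b/a) / cmod (b/a))"
    using assms by (intro arccos_less_arccos) auto
  then show ?thesis using vec_angle_div[OF assms(1)] arccos_cos assms by simp
qed




lemma arg_range:
  fixes z \<zeta> :: complex
  assumes "Im z > 0" "\<zeta> \<noteq> 0" "Im \<zeta> \<ge> 0" "Im (\<zeta> / z) \<le> 0"
  shows "0 \<le> Arg \<zeta> \<and> Arg \<zeta> \<le> Arg z \<and> 0 < Arg z \<and> Arg z < pi"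
proof -
  have z0: "z \<noteq> 0" using assms(1) by auto
  have bz: "-pi < Arg z" "Arg z \<le> pi" and bq: "-pi < Arg \<zeta>" "Arg \<zeta> \<le> pi" using Arg_bounded by auto
  have "sin (Arg z) > 0" using assms(1) Im_polar[of z] by (simp add: zero_less_mult_iff)
  then have az1: "0 < Arg z" using sin_pos_imp bz by auto
  have "Arg z \<noteq> pi" using \<open>sin (Arg z) > 0\<close> by auto
  then have az: "0 < Arg z" "Arg z < pi" using az1 bz by auto
  have "sin (Arg \<zeta>) \<ge> 0" using assms(3) Im_polar[of \<zeta>] assms(2) by (simp add: zero_le_mult_iff)
  then have q0: "0 \<le> Arg \<zeta>" using sin_nonneg_imp bq by auto
  have pz: "z = complex_of_real (cmod z) * cis (Arg z)" by (rule polar)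
  have pq: "\<zeta> = complex_of_real (cmod \<zeta>) * cis (Arg \<zeta>)" by (rule polar)
  have "\<zeta> / z = (complex_of_real (cmod \<zeta>) * cis (Arg \<zeta>)) / (complex_of_real (cmod z) * cis (Arg z))"
    by (simp only: polar[symmetric])
  also have "\<dots> = complex_of_real (cmod \<zeta> / cmod z) * (cis (Arg \<zeta>) / cis (Arg z))"
    by simp
  also have "\<dots> = complex_of_real (cmod \<zeta> / cmod z) * cis (Arg \<zeta> - Arg z)"
    by (simp only: cis_divide)
  finally have "Im (\<zeta> / z) = (cmod \<zeta> / cmod z) * sin (Arg \<zeta> - Arg z)" by simp
  moreover have "cmod \<zeta> / cmod z > 0" using assms(2) z0 by simp
  ultimately have "sin (Arg \<zeta> - Arg z) \<le> 0" using assms(4)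
    by (metis mult_le_0_iff not_le)
  moreover have "Arg \<zeta> - Arg z < pi" using bq az by linarith
  ultimately have "Arg \<zeta> - Arg z \<le> 0"
    using sin_gt_zero[of "Arg \<zeta> - Arg z"] by (cases "Arg \<zeta> - Arg z > 0") auto
  then show ?thesis using az q0 by auto
qed


lemma div_polar: "\<zeta>2 / \<zeta>1 = complex_of_real (cmod \<zeta>2 / cmod \<zeta>1) * cis (Arg \<zeta>2 - Arg \<zeta>1)"
proof -
  have "\<zeta>2 / \<zeta>1 = (complex_of_real (cmod \<zeta>2) * cis (Arg \<zeta>2)) / (complex_of_real (cmod \<zeta>1) * cis (Arg \<zeta>1))"
    by (simp only: polar[symmetric])
  also have "\<dots> = complex_of_real (cmod \<zeta>2 / cmod \<zeta>1) * (cis (Arg \<zeta>2) / cis (Arg \<zeta>1))"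
    by simp
  also have "\<dots> = complex_of_real (cmod \<zeta>2 / cmod \<zeta>1) * cis (Arg \<zeta>2 - Arg \<zeta>1)"
    by (simp only: cis_divide)
  finally show ?thesis .
qed

lemma re_over_rcis: "r > 0 \<Longrightarrow> Re (complex_of_real r * cis x) / cmod (complex_of_real r * cis x) = cos x"
  by (simp add: norm_mult)

lemma cone_angle:
  fixes d1 d2 e1 e2 :: complex
  assumes "d1 \<noteq> 0" "Im (d2/d1) > 0" "e1 \<noteq> 0" "e2 \<noteq> 0"
    "Im (e1/d1) \<ge> 0" "Im (e1/d2) \<le> 0" "Im (e2/d1) \<ge> 0" "Im (e2/d2) \<le> 0"
  shows "vec_angle e1 e2 \<le> vec_angle d1 d2"
proof -
  define z where "z = d2/d1"
  have d2: "d2 \<noteq> 0" using assms(2) by auto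
  have e1: "e1/d2 = (e1/d1)/z" and e2: "e2/d2 = (e2/d1)/z" using assms(1) d2 by (auto simp: z_def)
  have zp: "Im z > 0" using assms(2) z_def by simp
  have i1: "Im ((e1/d1)/z) \<le> 0" by (subst e1[symmetric]) (rule assms(6))
  have i2: "Im ((e2/d1)/z) \<le> 0" by (subst e2[symmetric]) (rule assms(8))
  have n1: "e1/d1 \<noteq> 0" "e2/d1 \<noteq> 0" using assms(1,3,4) by auto
  have r1: "0 \<le> Arg (e1/d1) \<and> Arg (e1/d1) \<le> Arg z \<and> 0 < Arg z \<and> Arg z < pi"
    by (rule arg_range[OF zp n1(1) assms(5) i1])
  have r2: "0 \<le> Arg (e2/d1) \<and> Arg (e2/d1) \<le> Arg z"
    using arg_range[OF zp n1(2) assms(7) i2] by simp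
  have z0: "z \<noteq> 0" using zp by auto
  have "vec_angle d1 d2 = arccos (Re z / cmod z)"
    using vec_angle_div[OF assms(1)] z_def by simp
  also have "\<dots> = arccos (cos (Arg z))" using Re_over[OF z0] by simp
  finally have "vec_angle d1 d2 = arccos (cos (Arg z))" .
  also have "\<dots> = Arg z" using r1 by (intro arccos_cos) auto
  finally have A: "vec_angle d1 d2 = Arg z" .
  define \<zeta>1 where "\<zeta>1 = e1/d1"
  define \<zeta>2 where "\<zeta>2 = e2/d1"
  have q1: "\<zeta>1 \<noteq> 0" "\<zeta>2 \<noteq> 0" using assms by (auto simp: \<zeta>1_def \<zeta>2_def)
  have "e2/e1 = \<zeta>2/\<zeta>1" using assms(1,3) by (simp add: \<zeta>1_def \<zeta>2_def)
  also have "\<dots> = complex_of_real (cmod \<zeta>2 / cmod \<zeta>1) * cis (Arg \<zeta>2 - Arg \<zeta>1)"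
    by (rule div_polar)
  finally have E: "e2/e1 = complex_of_real (cmod \<zeta>2 / cmod \<zeta>1) * cis (Arg \<zeta>2 - Arg \<zeta>1)" .
  have pos: "cmod \<zeta>2 / cmod \<zeta>1 > 0" using q1 by simp
  have "Re (e2/e1) / cmod (e2/e1) = cos (Arg \<zeta>2 - Arg \<zeta>1)"
    unfolding E by (rule re_over_rcis[OF pos])
  also have "\<dots> = cos \<bar>Arg \<zeta>2 - Arg \<zeta>1\<bar>" by (metis abs_real_def cos_minus minus_diff_eq)
  finally have C: "Re (e2/e1) / cmod (e2/e1) = cos \<bar>Arg \<zeta>2 - Arg \<zeta>1\<bar>" .
  have le: "\<bar>Arg \<zeta>2 - Arg \<zeta>1\<bar> \<le> Arg z" using r1 r2 by (auto simp: \<zeta>1_def \<zeta>2_def)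
  have "vec_angle e1 e2 = arccos (cos \<bar>Arg \<zeta>2 - Arg \<zeta>1\<bar>)"
    using vec_angle_div[OF assms(3)] C by simp
  also have "\<dots> = \<bar>Arg \<zeta>2 - Arg \<zeta>1\<bar>" using le r1 by (intro arccos_cos) auto
  finally show ?thesis using A le by simp
qed




locale rpoly =
  fixes n :: nat and c :: complex and \<rho> \<theta> :: real
  assumes n4: "n > 4" and rp: "\<rho> > 0"
begin

definition W :: "int \<Rightarrow> complex" where
  "W j = c + complex_of_real \<rho> * cis (\<theta> + 2 * pi * real_of_int j / real n)"
definition Ed :: "int \<Rightarrow> complex set" where "Ed j = closed_segment (W j) (W (j+1))"
definition Op :: "int \<Rightarrow> complex set" where "Op j = open_segment (W j) (W (j+1))"
definition om :: "real \<Rightarrow> complex" where "om x = cis (2 * pi * x / real n)"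
definition U :: complex where "U = complex_of_real \<rho> * cis \<theta>"
definition \<beta> :: real where "\<beta> = pi * (real n - 3) / real n"

lemma npos: "real n > 4" using n4 by simp

lemma om_mult: "om a * om b = om (a + b)"
  unfolding om_def by (simp add: cis_mult add_divide_distrib distrib_left)

lemma W_om: "W j = c + U * om (real_of_int j)"
  unfolding W_def U_def om_def by (simp add: cis_mult[symmetric] mult.assoc)

lemma W_per: "W (j + int n * q) = W j"
proof -
  have "om (real_of_int (j + int n * q)) = om (real_of_int j) * om (real n * real_of_int q)"
    by (simp add: om_mult)
  moreover have "om (real n * real_of_int q) = 1"
  proof -
    have "2 * pi * (real n * real_of_int q) / real n = 2 * pi * real_of_int q" using n4 by simp
    then show ?thesis unfolding om_def by simp
  qed
  ultimately show ?thesis by (simp add: W_om)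
qed

lemma W_mod: "W (j mod int n) = W j"
  using W_per[of "j mod int n" "j div int n"] by (simp add: mult.commute)

lemma Ed_per: "Ed (j + int n * q) = Ed j"
  unfolding Ed_def using W_per[of j q] W_per[of "j+1" q] by (simp add: algebra_simps)
lemma Op_per: "Op (j + int n * q) = Op j"
  unfolding Op_def using W_per[of j q] W_per[of "j+1" q] by (simp add: algebra_simps)
lemma Ed_mod: "Ed (j mod int n) = Ed j"
  using Ed_per[of "j mod int n" "j div int n"] by (simp add: mult.commute)
lemma Op_mod: "Op (j mod int n) = Op j"
  using Op_per[of "j mod int n" "j div int n"] by (simp add: mult.commute)

lemma U0: "U \<noteq> 0" unfolding U_def using rp by simp

lemma om1: "om 1 \<noteq> 1"
proof
  assume "om 1 = 1"
  then have "cos (2*pi/real n) = 1" unfolding om_def by (metis cis.sel(1) one_complex.simps(1) mult_1_right)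
  moreover have "cos (2*pi/real n) < cos 0"
    using npos by (intro cos_monotone_0_pi) (auto simp: field_simps)
  ultimately show False by simp
qed

lemma D_eq: "W (k+1) - W k = U * om (real_of_int k) * (om 1 - 1)"
  by (simp add: W_om algebra_simps om_mult)

lemma D0: "W (k+1) - W k \<noteq> 0"
  unfolding D_eq using U0 om1 by (simp add: om_def)


lemma cis_minus_pi: "cis (x - pi) = - cis x"
  by (simp add: complex_eq_iff cos_diff sin_diff)
lemma cis_plus_pi: "cis (x + pi) = - cis x"
  by (simp add: complex_eq_iff cos_add sin_add)

lemma beta_bounds: "0 < \<beta>" "\<beta> < pi"
  using npos by (auto simp: \<beta>_def field_simps)

lemma sin1: "sin (pi / real n) > 0"
  using npos by (intro sin_gt_zero) (auto simp: field_simps)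
lemma sin2: "sin (2 * pi / real n) > 0"
  using npos by (intro sin_gt_zero) (auto simp: field_simps)
lemma sin4: "sin (4 * pi / real n) > 0"
  using npos by (intro sin_gt_zero) (auto simp: field_simps)

lemma om_shift: "om (real_of_int (k + m)) = om (real_of_int k) * om (real_of_int m)"
  by (simp add: om_mult)

lemma om_m1_1: "om (-1) * om 1 = 1" by (simp add: om_mult) (simp add: om_def)
lemma om_m2_1: "om (-2) * om 1 = om (-1)" by (simp add: om_mult)
lemma om_1_1: "om 1 * om 1 = om 2" by (simp add: om_mult)
lemma om_2_1: "om 2 * om 1 = om 3" by (simp add: om_mult)

lemma c_m1: "om (-1) * cis (-\<beta>) = - cis (pi / real n)"
proof -
  have "om (-1) * cis (-\<beta>) = cis (pi / real n - pi)"
    unfolding om_def \<beta>_def cis_mult using npos by (intro arg_cong[where f=cis]) (simp add: field_simps)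
  then show ?thesis by (simp add: cis_minus_pi)
qed
lemma c_m2: "om (-2) * cis (-\<beta>) = - cis (- pi / real n)"
proof -
  have "om (-2) * cis (-\<beta>) = cis (- pi / real n - pi)"
    unfolding om_def \<beta>_def cis_mult using npos by (intro arg_cong[where f=cis]) (simp add: field_simps)
  then show ?thesis by (simp add: cis_minus_pi)
qed
lemma c_1: "om 1 * cis \<beta> = - cis (- pi / real n)"
proof -
  have "om 1 * cis \<beta> = cis (- pi / real n + pi)"
    unfolding om_def \<beta>_def cis_mult using npos by (intro arg_cong[where f=cis]) (simp add: field_simps)
  then show ?thesis by (simp only: cis_plus_pi)
qed
lemma c_2: "om 2 * cis \<beta> = - cis (pi / real n)"
proof -
  have "om 2 * cis \<beta> = cis (pi / real n + pi)"
    unfolding om_def \<beta>_def cis_mult using npos by (intro arg_cong[where f=cis]) (simp add: field_simps)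
  then show ?thesis by (simp add: cis_plus_pi)
qed

lemma Im_om: "Im (om x) = sin (2 * pi * x / real n)" by (simp add: om_def)


lemma Ga:
  assumes t: "t \<ge> 0" and l: "l > 0" and s: "0 < s" "s \<le> 1"
    and v: "v = W k + of_real t * (W (k+1) - W k)"
    and x: "x - v = of_real l * (W (k+1) - W k)"
    and y: "y = W (k-2) + of_real s * (W (k-1) - W (k-2))"
  shows "y \<noteq> v \<and> vec_angle (x - v) (y - v) > \<beta>"
proof -
  define K where "K = om (real_of_int k)"
  define D where "D = W (k+1) - W k"
  define Y where "Y = - of_real (1-s) * (om (-1) + om (-2)) - of_real s * om (-1)"
  have D: "D = U * K * (om 1 - 1)" unfolding D_def K_def by (rule D_eq)
  have sh1: "om (real_of_int k - 1) = K * om (-1)" and sh2: "om (real_of_int k - 2) = K * om (-2)"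
    unfolding K_def by (simp_all add: om_mult)
  have id: "om (-2) + of_real s * (om (-1) - om (-2)) - 1 = Y * (om 1 - 1)"
    unfolding Y_def using om_m1_1 om_m2_1 by (simp add: algebra_simps)
  have "y - v = U * K * (om (-2) + of_real s * (om (-1) - om (-2)) - 1) - of_real t * D"
    unfolding y v D_def by (simp add: W_om sh1 sh2 algebra_simps flip: K_def)
  also have "\<dots> = (Y - of_real t) * D" unfolding id D by (simp add: algebra_simps)
  finally have yv: "y - v = (Y - of_real t) * D" .
  have D0': "D \<noteq> 0" unfolding D_def by (rule D0)
  have xv0: "x - v \<noteq> 0" using x l D0' D_def by simp
  define z where "z = (Y - of_real t) / of_real l"
  have zq: "(y - v) / (x - v) = z" unfolding yv x z_def D_def[symmetric] using D0' l by simp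
  have "Im Y = (1-s) * (sin (2*pi/real n) + sin (4*pi/real n)) + s * sin (2*pi/real n)"
    unfolding Y_def by (simp add: Im_om algebra_simps)
  then have ImY: "Im Y \<ge> 0" using s sin2 sin4 by (simp add: add_nonneg_nonneg)
  have "Y * cis (-\<beta>) = - of_real (1-s) * (om (-1) * cis (-\<beta>) + om (-2) * cis (-\<beta>)) - of_real s * (om (-1) * cis (-\<beta>))"
    unfolding Y_def by (simp add: algebra_simps)
  also have "\<dots> = of_real (1-s) * (cis (pi/real n) + cis (- pi/real n)) + of_real s * cis (pi / real n)"
    unfolding c_m1 c_m2 by (simp add: algebra_simps)
  finally have "Im (Y * cis (-\<beta>)) = s * sin (pi / real n)" by simp
  then have I2: "Im ((Y - of_real t) * cis (-\<beta>)) = s * sin (pi / real n) + t * sin \<beta>"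
    by (simp add: algebra_simps)
  have "s * sin (pi / real n) + t * sin \<beta> > 0"
    using s t sin1 sin_ge_zero[of \<beta>] beta_bounds by (simp add: add_pos_nonneg)
  then have "Im (z * cis (-\<beta>)) > 0" using I2 l unfolding z_def by (simp add: Im_divide_of_real)
  moreover have "Im z \<ge> 0" using ImY l unfolding z_def by (simp add: Im_divide_of_real)
  ultimately have "Re z / cmod z < cos \<beta>" "z \<noteq> 0" using beta_bounds by (intro ang_gt, auto)
  then show ?thesis using vec_angle_gt[OF xv0] zq beta_bounds by auto
qed


lemma Gb:
  assumes t: "t \<ge> 0" and l: "l > 0" and s: "0 \<le> s" "s < 1"
    and v: "v = W k + of_real t * (W (k+1) - W k)"
    and x: "x - v = of_real l * (W (k+1) - W k)"
    and y: "y = W (k-1) + of_real s * (W k - W (k-1))"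
  shows "y \<noteq> v \<and> vec_angle (x - v) (y - v) > \<beta>"
proof -
  define K where "K = om (real_of_int k)"
  define D where "D = W (k+1) - W k"
  define Y where "Y = - of_real (1-s) * om (-1)"
  have D: "D = U * K * (om 1 - 1)" unfolding D_def K_def by (rule D_eq)
  have sh1: "om (real_of_int k - 1) = K * om (-1)"
    unfolding K_def by (simp_all add: om_mult)
  have id: "om (-1) + of_real s * (1 - om (-1)) - 1 = Y * (om 1 - 1)"
    unfolding Y_def using om_m1_1 by (simp add: algebra_simps)
  have "y - v = U * K * (om (-1) + of_real s * (1 - om (-1)) - 1) - of_real t * D"
    unfolding y v D_def by (simp add: W_om sh1 algebra_simps flip: K_def)
  also have "\<dots> = (Y - of_real t) * D" unfolding id D by (simp add: algebra_simps)
  finally have yv: "y - v = (Y - of_real t) * D" .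
  have D0': "D \<noteq> 0" unfolding D_def by (rule D0)
  have xv0: "x - v \<noteq> 0" using x l D0' D_def by simp
  define z where "z = (Y - of_real t) / of_real l"
  have zq: "(y - v) / (x - v) = z" unfolding yv x z_def D_def[symmetric] using D0' l by simp
  have "Im Y = (1-s) * sin (2*pi/real n)"
    unfolding Y_def by (simp add: Im_om algebra_simps)
  then have ImY: "Im Y \<ge> 0" using s sin2 by simp
  have "Y * cis (-\<beta>) = - of_real (1-s) * (om (-1) * cis (-\<beta>))"
    unfolding Y_def by (simp add: algebra_simps)
  also have "\<dots> = of_real (1-s) * cis (pi / real n)"
    unfolding c_m1 by (simp add: algebra_simps)
  finally have "Im (Y * cis (-\<beta>)) = (1-s) * sin (pi / real n)" by simp
  then have I2: "Im ((Y - of_real t) * cis (-\<beta>)) = (1-s) * sin (pi / real n) + t * sin \<beta>"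
    by (simp add: algebra_simps)
  have "(1-s) * sin (pi / real n) + t * sin \<beta> > 0"
    using s t sin1 sin_ge_zero[of \<beta>] beta_bounds by (simp add: add_pos_nonneg)
  then have "Im (z * cis (-\<beta>)) > 0" using I2 l unfolding z_def by (simp add: Im_divide_of_real)
  moreover have "Im z \<ge> 0" using ImY l unfolding z_def by (simp add: Im_divide_of_real)
  ultimately have "Re z / cmod z < cos \<beta>" "z \<noteq> 0" using beta_bounds by (intro ang_gt, auto)
  then show ?thesis using vec_angle_gt[OF xv0] zq beta_bounds by auto
qed

lemma Gc:
  assumes t: "t \<ge> 0" and l: "l > 0" and s: "0 \<le> s" "s < 1"
    and v: "v = W (k+1) - of_real t * (W (k+1) - W k)"
    and x: "x - v = - of_real l * (W (k+1) - W k)"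
    and y: "y = W (k+2) + of_real s * (W (k+3) - W (k+2))"
  shows "y \<noteq> v \<and> vec_angle (x - v) (y - v) > \<beta>"
proof -
  define K where "K = om (real_of_int k)"
  define D where "D = W (k+1) - W k"
  define X where "X = of_real (1-s) * om 1 + of_real s * (om 1 + om 2)"
  have D: "D = U * K * (om 1 - 1)" unfolding D_def K_def by (rule D_eq)
  have sh1: "om (real_of_int k + 1) = K * om 1" and sh2: "om (real_of_int k + 2) = K * om 2"
    and sh3: "om (real_of_int k + 3) = K * om 3" and sh1': "om (1 + real_of_int k) = K * om 1"
    and sh2': "om (2 + real_of_int k) = K * om 2" and sh3': "om (3 + real_of_int k) = K * om 3"
    unfolding K_def by (simp_all add: om_mult add.commute)
  have id: "om 2 + of_real s * (om 3 - om 2) - om 1 = X * (om 1 - 1)"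
    unfolding X_def using om_1_1 om_2_1 by (simp add: algebra_simps)
  have "y - v = U * K * (om 2 + of_real s * (om 3 - om 2) - om 1) + of_real t * D"
    unfolding y v D_def by (simp add: W_om sh1 sh2 sh3 sh1' sh2' sh3' algebra_simps flip: K_def)
  also have "\<dots> = (X + of_real t) * D" unfolding id D by (simp add: algebra_simps)
  finally have yv: "y - v = (X + of_real t) * D" .
  have D0': "D \<noteq> 0" unfolding D_def by (rule D0)
  have xv0: "x - v \<noteq> 0" using x l D0' D_def by simp
  define z where "z = - (X + of_real t) / of_real l"
  have zq: "(y - v) / (x - v) = z" unfolding yv x z_def D_def[symmetric] using D0' l by (simp add: field_simps)
  have "Im X = (1-s) * sin (2*pi/real n) + s * (sin (2*pi/real n) + sin (4*pi/real n))"
    unfolding X_def by (simp add: Im_om algebra_simps)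
  then have ImX: "Im X \<ge> 0" using s sin2 sin4 by (simp add: add_nonneg_nonneg)
  have "X * cis \<beta> = of_real (1-s) * (om 1 * cis \<beta>) + of_real s * (om 1 * cis \<beta> + om 2 * cis \<beta>)"
    unfolding X_def by (simp add: algebra_simps)
  also have "\<dots> = - of_real (1-s) * cis (- pi / real n) - of_real s * (cis (- pi/real n) + cis (pi / real n))"
    unfolding c_1 c_2 by (simp add: algebra_simps)
  finally have eqX: "X * cis \<beta> = - of_real (1-s) * cis (- pi / real n) - of_real s * (cis (- pi/real n) + cis (pi / real n))" .
  have "Im (X * cis \<beta>) = (1-s) * sin (pi / real n)" unfolding eqX by (simp add: algebra_simps)
  then have I2: "Im ((X + of_real t) * cis \<beta>) = (1-s) * sin (pi / real n) + t * sin \<beta>"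
    by (simp add: algebra_simps)
  have "(1-s) * sin (pi / real n) + t * sin \<beta> > 0"
    using s t sin1 sin_ge_zero[of \<beta>] beta_bounds by (simp add: add_pos_nonneg)
  moreover have "z * cis \<beta> = - ((X + of_real t) * cis \<beta>) / of_real l" unfolding z_def by (simp add: field_simps)
  then have "Im (z * cis \<beta>) = - Im ((X + of_real t) * cis \<beta>) / l" by (simp add: Im_divide_of_real field_simps)
  ultimately have "Im (z * cis \<beta>) < 0" using I2 l by (simp add: divide_neg_pos)
  moreover have "Im z \<le> 0" using ImX l unfolding z_def by (simp add: Im_divide_of_real)
  ultimately have "Re z / cmod z < cos \<beta>" "z \<noteq> 0" using beta_bounds by (intro ang_gt', auto)
  then show ?thesis using vec_angle_gt[OF xv0] zq beta_bounds by auto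
qed

end



lemma cos_add_int2pi: "cos (x + 2 * pi * real_of_int q) = cos x"
  by (simp add: cos_add)

context rpoly begin

definition hf :: "int \<Rightarrow> complex \<Rightarrow> real" where
  "hf j z = Re (cnj (cis (\<theta> + pi * (2 * real_of_int j + 1) / real n)) * (z - c))"
definition M :: real where "M = \<rho> * cos (pi / real n)"

lemma hf_W: "hf j (W m) = \<rho> * cos (pi * (2 * real_of_int (m - j) - 1) / real n)"
proof -
  define a where "a = \<theta> + pi * (2 * real_of_int j + 1) / real n"
  define b where "b = \<theta> + 2 * pi * real_of_int m / real n"
  have "W m - c = complex_of_real \<rho> * cis b" unfolding W_def b_def by simp
  then have "cnj (cis a) * (W m - c) = complex_of_real \<rho> * (cis (-a) * cis b)" by (simp add: cis_cnj)
  also have "\<dots> = complex_of_real \<rho> * cis (b - a)" by (simp add: cis_mult)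
  finally have "cnj (cis (\<theta> + pi * (2 * real_of_int j + 1) / real n)) * (W m - c)
      = complex_of_real \<rho> * cis (\<theta> + 2 * pi * real_of_int m / real n - (\<theta> + pi * (2 * real_of_int j + 1) / real n))"
    unfolding a_def b_def .
  moreover have "\<theta> + 2 * pi * real_of_int m / real n - (\<theta> + pi * (2 * real_of_int j + 1) / real n)
     = pi * (2 * real_of_int (m - j) - 1) / real n" using npos by (simp add: field_simps)
  ultimately show ?thesis unfolding hf_def by simp
qed

lemma cos_odd_le:
  fixes d :: int
  shows "cos (pi * (2 * real_of_int d - 1) / real n) \<le> cos (pi / real n)
    \<and> (cos (pi * (2 * real_of_int d - 1) / real n) = cos (pi / real n) \<longrightarrow> d mod int n \<in> {0, 1})"
proof -
  define r where "r = d mod int n"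
  define q where "q = d div int n"
  have d: "d = r + int n * q" unfolding r_def q_def by simp
  have r: "0 \<le> r" "r < int n" unfolding r_def using n4 by auto
  have "pi * (2 * real_of_int d - 1) / real n = pi * (2 * real_of_int r - 1) / real n + 2 * pi * real_of_int q"
    unfolding d using npos by (simp add: field_simps)
  then have e: "cos (pi * (2 * real_of_int d - 1) / real n) = cos (pi * (2 * real_of_int r - 1) / real n)"
    by (simp add: cos_add_int2pi)
  have pn: "0 < pi / real n" using npos by simp
  show ?thesis
  proof (cases "r \<le> 1")
    case True
    then have "r = 0 \<or> r = 1" using r by auto
    then show ?thesis unfolding e r_def[symmetric] by (auto simp: minus_divide_left[symmetric])
  next
    case False
    then have r2: "r \<ge> 2" by simp
    have "cos (pi * (2 * real_of_int r - 1) / real n) < cos (pi / real n)"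
    proof (cases "2 * r - 1 \<le> int n")
      case True
      then have "real_of_int (2 * r - 1) \<le> real n" by linarith
      then have "pi * (2 * real_of_int r - 1) \<le> pi * real n" by (intro mult_left_mono) auto
      then have "pi * (2 * real_of_int r - 1) / real n \<le> pi" using npos by (simp add: field_simps)
      moreover have "pi / real n < pi * (2 * real_of_int r - 1) / real n"
        using r2 npos by (intro divide_strict_right_mono) (auto simp: field_simps)
      ultimately show ?thesis using pn by (intro cos_monotone_0_pi) auto
    next
      case False
      define x where "x = pi * (2 * real_of_int r - 1) / real n"
      have cx: "cos x = cos (2 * pi - x)" by simp
      have ex: "2 * pi - x = pi * (2 * real n - 2 * real_of_int r + 1) / real n"
        unfolding x_def using npos by (simp add: field_simps)
      define A where "A = 2 * real n - 2 * real_of_int r + 1"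
      have A1: "A \<le> real n" "1 < A" using r False unfolding A_def by linarith+
      have "pi * A \<le> pi * real n" using A1 by (intro mult_left_mono) auto
      then have a1: "pi * A / real n \<le> pi" using npos by (simp add: field_simps)
      have a2: "pi / real n < pi * A / real n" using A1 npos by (intro divide_strict_right_mono) auto
      have "2 * pi - x \<le> pi" "pi / real n < 2 * pi - x" "cos x = cos (2 * pi - x)"
        using a1 a2 cx unfolding ex A_def by auto
      then show ?thesis using pn cos_monotone_0_pi[of "pi / real n" "2 * pi - x"] unfolding x_def by auto
    qed
    then show ?thesis unfolding e by simp
  qed
qed

lemma hf_W_le: "hf j (W m) \<le> M"
  unfolding hf_W M_def using cos_odd_le[of "m - j"] rp by simp

lemma hf_W_eq: "hf j (W m) = M \<Longrightarrow> (m - j) mod int n \<in> {0, 1}"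
  unfolding hf_W M_def using cos_odd_le[of "m - j"] rp by auto

lemma hf_W0: "hf j (W j) = M" unfolding hf_W M_def by (simp add: minus_divide_left[symmetric])
lemma hf_W1: "hf j (W (j+1)) = M" unfolding hf_W M_def by simp

lemma hf_comb: "hf j ((1 - u) *\<^sub>R a + u *\<^sub>R b) = (1 - u) * hf j a + u * hf j b"
  unfolding hf_def by (simp add: scaleR_conv_of_real algebra_simps)

lemma hf_Ed: "z \<in> Ed j \<Longrightarrow> hf j z = M"
proof -
  assume "z \<in> Ed j"
  then obtain u where u: "z = (1 - u) *\<^sub>R W j + u *\<^sub>R W (j+1)"
    unfolding Ed_def closed_segment_def by auto
  show ?thesis unfolding u hf_comb hf_W0 hf_W1 by (simp add: algebra_simps)
qed

lemma seg_max:
  assumes "z \<in> closed_segment a b" "hf j a \<le> M" "hf j b \<le> M" "hf j z = M"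
  shows "(hf j a < M \<longrightarrow> z = b) \<and> (hf j b < M \<longrightarrow> z = a)"
proof -
  obtain u where u: "0 \<le> u" "u \<le> 1" "z = (1 - u) *\<^sub>R a + u *\<^sub>R b"
    using assms(1) unfolding closed_segment_def by auto
  have M: "(1 - u) * hf j a + u * hf j b = M" using assms(4) u(3) hf_comb by simp
  have 1: "hf j a < M \<Longrightarrow> u = 1"
  proof (rule ccontr)
    assume "hf j a < M" "u \<noteq> 1"
    then have "(1 - u) * hf j a < (1 - u) * M" using u by (intro mult_strict_left_mono) auto
    moreover have "u * hf j b \<le> u * M" using u assms(3) by (intro mult_left_mono) auto
    ultimately show False using M by (simp add: algebra_simps)
  qed
  have 2: "hf j b < M \<Longrightarrow> u = 0"
  proof (rule ccontr)
    assume "hf j b < M" "u \<noteq> 0"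
    then have "u * hf j b < u * M" using u by (intro mult_strict_left_mono) auto
    moreover have "(1 - u) * hf j a \<le> (1 - u) * M" using u assms(2) by (intro mult_left_mono) auto
    ultimately show False using M by (simp add: algebra_simps)
  qed
  show ?thesis using 1 2 u by auto
qed

lemma mod_small_zero:
  fixes a :: int
  assumes "a mod int n = 0" "- int n < a" "a < int n"
  shows "a = 0"
proof (cases "a \<ge> 0")
  case True then show ?thesis using assms by simp
next
  case False
  have "(a + int n) mod int n = 0" using assms(1) by simp
  moreover have "(a + int n) mod int n = a + int n" using False assms by (intro mod_pos_pos_trivial) auto
  ultimately show ?thesis using assms by simp
qed

lemma mod_small_one:
  fixes a :: int
  assumes "a mod int n = 1" "- int n < a" "a \<le> int n"
  shows "a = 1 \<or> a = 1 - int n"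
proof (cases "a \<ge> 0")
  case True
  show ?thesis
  proof (cases "a = int n")
    case True then show ?thesis using assms by simp
  next
    case False then show ?thesis using assms \<open>a \<ge> 0\<close> by simp
  qed
next
  case False
  have "(a + int n) mod int n = 1" using assms(1) by simp
  moreover have "(a + int n) mod int n = a + int n" using False assms by (intro mod_pos_pos_trivial) auto
  ultimately show ?thesis by simp
qed

lemma H_disj:
  assumes j: "0 \<le> j" "j < int n" and k: "0 \<le> k" "k < int n" and jk: "j \<noteq> k"
    and z: "z \<in> Ed j" "z \<noteq> W j" "z \<in> Ed k" "z \<noteq> W k"
  shows False
proof -
  have key: "(b + 1 - a) mod int n = 0"
    if a: "0 \<le> a" "a < int n" and b: "0 \<le> b" "b < int n" and ab: "a \<noteq> b"
      and za: "z \<in> Ed a" and zb: "z \<in> Ed b" "z \<noteq> W b" for a b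
  proof -
    have hz: "hf a z = M" using hf_Ed[OF za] .
    have "hf a (W (b+1)) = M"
    proof (rule ccontr)
      assume "hf a (W (b+1)) \<noteq> M"
      then have "hf a (W (b+1)) < M" using hf_W_le[of a "b+1"] by simp
      then have "z = W b" using seg_max[of z "W b" "W (b+1)" a] zb(1) hf_W_le hz unfolding Ed_def by auto
      then show False using zb(2) by simp
    qed
    then have m: "(b + 1 - a) mod int n \<in> {0,1}" using hf_W_eq[of a "b+1"] by simp
    show ?thesis
    proof (rule ccontr)
      assume "(b + 1 - a) mod int n \<noteq> 0"
      then have "(b + 1 - a) mod int n = 1" using m by simp
      then have "b + 1 - a = 1 \<or> b + 1 - a = 1 - int n" using mod_small_one[of "b+1-a"] a b by auto
      then show False using ab a b by auto
    qed
  qed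
  have 1: "(k + 1 - j) mod int n = 0" using key[OF j k jk z(1) z(3) z(4)] .
  have 2: "(j + 1 - k) mod int n = 0" using key[OF k j jk[symmetric] z(3) z(1) z(2)] .
  have "(k + 1 - j) = 0 \<or> k + 1 - j = int n"
  proof (cases "k + 1 - j = int n")
    case False then show ?thesis using mod_small_zero[of "k+1-j"] 1 j k by auto
  qed simp
  moreover have "(j + 1 - k) = 0 \<or> j + 1 - k = int n"
  proof (cases "j + 1 - k = int n")
    case False then show ?thesis using mod_small_zero[of "j+1-k"] 2 j k by auto
  qed simp
  ultimately show False using n4 by auto
qed

end



locale prereg = rpoly +
  fixes S :: "complex set"
  assumes fin: "finite S" and cardS: "card S = n"
    and cnd: "\<And>j. (card (S \<inter> Ed j) = 2 \<and> S \<inter> Op (j+1) = {}) \<or> (card (S \<inter> Ed (j+1)) = 2 \<and> S \<inter> Op j = {})"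
begin

definition T :: "int \<Rightarrow> bool" where "T j \<longleftrightarrow> card (S \<inter> Ed j) = 2"
definition H :: "int \<Rightarrow> complex set" where "H j = Ed j - {W j}"
definition g :: "int \<Rightarrow> nat" where "g j = card (S \<inter> H j)"

lemma notT: "\<not> T j \<Longrightarrow> T (j+1) \<and> T (j-1)"
  using cnd[of j] cnd[of "j-1"] unfolding T_def by auto

lemma T_per: "T (j + int n * q) = T j" unfolding T_def by (simp add: Ed_per)
lemma H_per: "H (j + int n * q) = H j" unfolding H_def by (simp add: Ed_per W_per)
lemma g_per: "g (j + int n * q) = g j" unfolding g_def by (simp add: H_per)

lemma W_in_Ed: "W j \<in> Ed j" "W (j+1) \<in> Ed j" unfolding Ed_def by auto

lemma Wne: "W (j+1) \<noteq> W j" using D0[of j] by simp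

lemma H_ne: assumes "T j" shows "g j \<ge> 1"
proof -
  obtain a b where ab: "a \<noteq> b" "S \<inter> Ed j = {a, b}" using assms unfolding T_def by (auto simp: card_2_iff)
  then have "a \<in> S \<inter> H j \<or> b \<in> S \<inter> H j" unfolding H_def by auto
  then have "S \<inter> H j \<noteq> {}" by auto
  then show ?thesis unfolding g_def using fin by (simp add: Suc_le_eq card_gt_0_iff)
qed

lemma pair: assumes "\<not> T j" shows "g j + g (j+1) \<ge> 2"
proof -
  have "T (j+1)" using notT[OF assms] by simp
  then obtain a b where ab: "a \<noteq> b" "S \<inter> Ed (j+1) = {a, b}" unfolding T_def by (auto simp: card_2_iff)
  have WH: "W (j+1) \<in> H j" unfolding H_def using W_in_Ed Wne by auto
  have f1: "finite (S \<inter> H j)" "finite (S \<inter> H (j+1))" using fin by auto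
  have HH: "x \<in> Ed (j+1) \<Longrightarrow> x \<noteq> W (j+1) \<Longrightarrow> x \<in> H (j+1)" for x unfolding H_def by auto
  show ?thesis
  proof (cases "a = W (j+1) \<or> b = W (j+1)")
    case True
    then obtain p q where pq: "{p, q} = {a, b}" "p = W (j+1)" "q \<noteq> W (j+1)" using ab(1) by auto
    have "p \<in> S \<inter> H j" using pq ab WH by auto
    then have "g j \<ge> 1" unfolding g_def using f1 by (simp add: Suc_le_eq card_gt_0_iff) blast
    moreover have "q \<in> S \<inter> H (j+1)" using pq ab HH by auto
    then have "g (j+1) \<ge> 1" unfolding g_def using f1 by (simp add: Suc_le_eq card_gt_0_iff) blast
    ultimately show ?thesis by simp
  next
    case False
    then have "{a, b} \<subseteq> S \<inter> H (j+1)" using ab HH by auto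
    then have "card {a, b} \<le> g (j+1)" unfolding g_def using f1 by (intro card_mono) auto
    then show ?thesis using ab(1) by simp
  qed
qed

lemma sum_shift:
  fixes F :: "int \<Rightarrow> nat"
  assumes "F (int n) = F 0"
  shows "(\<Sum>i<n. F (int i + 1)) = (\<Sum>i<n. F (int i))"
proof -
  have "(\<Sum>i<Suc n. F (int i)) = F 0 + (\<Sum>i<n. F (int (Suc i)))" using sum.lessThan_Suc_shift[of "\<lambda>i. F (int i)" n] by simp
  moreover have "(\<Sum>i<Suc n. F (int i)) = (\<Sum>i<n. F (int i)) + F (int n)" by simp
  ultimately show ?thesis using assms by (simp add: add.commute)
qed

lemma decomp:
  fixes h :: "int \<Rightarrow> nat"
  assumes hp: "h (int n) = h 0"
  shows "(\<Sum>i<n. h (int i)) = (\<Sum>i<n. (if \<not> T (int i) then h (int i) + h (int i + 1) else 0)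
                                  + (if T (int i) \<and> T (int i - 1) then h (int i) else 0))"
proof -
  define F where "F k = (if \<not> T (k - 1) then h k else 0)" for k
  have Tp: "T (int n - 1) = T (0 - 1)" using T_per[of "-1" 1] by simp
  have Fp: "F (int n) = F 0" unfolding F_def using hp Tp by simp
  have "(\<Sum>i<n. (if \<not> T (int i) then h (int i) + h (int i + 1) else 0)
                                  + (if T (int i) \<and> T (int i - 1) then h (int i) else 0))
      = (\<Sum>i<n. (if \<not> T (int i) then h (int i) else 0) + F (int i + 1)
                                  + (if T (int i) \<and> T (int i - 1) then h (int i) else 0))"
    by (intro sum.cong) (auto simp: F_def)
  also have "\<dots> = (\<Sum>i<n. (if \<not> T (int i) then h (int i) else 0)) + (\<Sum>i<n. F (int i + 1))
      + (\<Sum>i<n. (if T (int i) \<and> T (int i - 1) then h (int i) else 0))"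
    by (simp add: sum.distrib)
  also have "(\<Sum>i<n. F (int i + 1)) = (\<Sum>i<n. F (int i))" by (rule sum_shift[OF Fp])
  also have "(\<Sum>i<n. (if \<not> T (int i) then h (int i) else 0)) + (\<Sum>i<n. F (int i))
      + (\<Sum>i<n. (if T (int i) \<and> T (int i - 1) then h (int i) else 0))
      = (\<Sum>i<n. (if \<not> T (int i) then h (int i) else 0) + F (int i)
      + (if T (int i) \<and> T (int i - 1) then h (int i) else 0))"
    by (simp add: sum.distrib)
  also have "\<dots> = (\<Sum>i<n. h (int i))"
  proof (intro sum.cong refl)
    fix i assume "i \<in> {..<n}"
    show "(if \<not> T (int i) then h (int i) else 0) + F (int i)
      + (if T (int i) \<and> T (int i - 1) then h (int i) else 0) = h (int i)"
      using notT[of "int i"] unfolding F_def by auto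
  qed
  finally show ?thesis by simp
qed

lemma sum_g: "(\<Sum>i<n. g (int i)) \<ge> n"
proof -
  have gp: "g (int n) = g 0" using g_per[of 0 1] by simp
  have "n = (\<Sum>i<n. (\<lambda>_. 1::nat) (int i))" by simp
  also have "\<dots> = (\<Sum>i<n. (if \<not> T (int i) then 1 + 1 else 0) + (if T (int i) \<and> T (int i - 1) then 1 else 0))"
    using decomp[of "\<lambda>_. 1"] by simp
  also have "\<dots> \<le> (\<Sum>i<n. (if \<not> T (int i) then g (int i) + g (int i + 1) else 0)
                                  + (if T (int i) \<and> T (int i - 1) then g (int i) else 0))"
  proof (intro sum_mono)
    fix i assume "i \<in> {..<n}"
    show "(if \<not> T (int i) then 1 + 1 else 0) + (if T (int i) \<and> T (int i - 1) then 1 else 0)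
      \<le> (if \<not> T (int i) then g (int i) + g (int i + 1) else 0)
                                  + (if T (int i) \<and> T (int i - 1) then g (int i) else 0)"
      using pair[of "int i"] H_ne[of "int i"] by auto
  qed
  also have "\<dots> = (\<Sum>i<n. g (int i))" using decomp[OF gp] by simp
  finally show ?thesis .
qed

lemma S_bd: "S \<subseteq> (\<Union>i<n. Ed (int i))"
proof (rule ccontr)
  assume "\<not> ?thesis"
  then obtain z where z: "z \<in> S" "z \<notin> (\<Union>i<n. Ed (int i))" by auto
  have disj: "(S \<inter> H (int i)) \<inter> (S \<inter> H (int j)) = {}" if "i < n" "j < n" "i \<noteq> j" for i j
  proof (rule ccontr)
    assume "\<not> ?thesis"
    then obtain w where "w \<in> H (int i)" "w \<in> H (int j)" by auto
    then show False using H_disj[of "int i" "int j" w] that unfolding H_def by auto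
  qed
  have "card (\<Union>i<n. S \<inter> H (int i)) = (\<Sum>i<n. card (S \<inter> H (int i)))"
    using fin disj by (intro card_UN_disjoint) auto
  then have c1: "card (\<Union>i<n. S \<inter> H (int i)) \<ge> n" using sum_g unfolding g_def by simp
  have "(\<Union>i<n. S \<inter> H (int i)) \<subseteq> S - {z}" using z unfolding H_def by auto
  then have "card (\<Union>i<n. S \<inter> H (int i)) \<le> card (S - {z})" using fin by (intro card_mono) auto
  also have "\<dots> = n - 1" using z fin cardS by simp
  finally show False using c1 n4 by simp
qed

end



lemma seg_param:
  fixes a b x :: complex
  assumes "x \<in> closed_segment a b"
  shows "\<exists>s. 0 \<le> s \<and> s \<le> 1 \<and> x = a + of_real s * (b - a)"
proof -
  obtain u where u: "0 \<le> u" "u \<le> 1" "x = (1 - u) *\<^sub>R a + u *\<^sub>R b"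
    using assms unfolding closed_segment_def by auto
  then show ?thesis by (intro exI[of _ u]) (simp add: scaleR_conv_of_real algebra_simps)
qed

lemma pick2: "card A = 2 \<Longrightarrow> \<exists>x\<in>A. x \<noteq> p"
  by (auto simp: card_2_iff)

context prereg begin

lemma param_ne:
  assumes "x \<in> Ed j"
  obtains s where "0 \<le> s" "s \<le> 1" "x = W j + of_real s * (W (j+1) - W j)"
  using seg_param[of x "W j" "W (j+1)"] assms unfolding Ed_def by auto

lemma pickT:
  assumes "T j"
  obtains x where "x \<in> S" "x \<in> Ed j" "x \<noteq> p"
  using pick2[of "S \<inter> Ed j" p] assms unfolding T_def by auto

lemma vtx:
  assumes vS: "v \<in> S" and vW: "v = W m"
  shows "\<exists>x\<in>S. \<exists>y\<in>S. x \<noteq> v \<and> y \<noteq> v \<and> vec_angle (x - v) (y - v) > \<beta>"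
proof (cases "T m")
  case True
  obtain x where x: "x \<in> S" "x \<in> Ed m" "x \<noteq> v" using pickT[OF True] by blast
  obtain s where s: "0 \<le> s" "s \<le> 1" "x = W m + of_real s * (W (m+1) - W m)" using param_ne[OF x(2)] by blast
  have s0: "s > 0" using s x(3) vW by (cases "s = 0") auto
  have xv: "x - v = of_real s * (W (m+1) - W m)" using s vW by simp
  have vv: "v = W m + of_real 0 * (W (m+1) - W m)" using vW by simp
  show ?thesis
  proof (cases "T (m-1)")
    case True
    obtain y where y: "y \<in> S" "y \<in> Ed (m-1)" "y \<noteq> W m" using pickT[OF True] by blast
    obtain s' where s': "0 \<le> s'" "s' \<le> 1" "y = W (m-1) + of_real s' * (W (m-1+1) - W (m-1))" using param_ne[OF y(2)] by blast
    have s'1: "s' < 1" using s' y(3) by (cases "s' = 1") auto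
    have "y \<noteq> v \<and> vec_angle (x - v) (y - v) > \<beta>"
      by (rule Gb[of 0 s s' v m x y]) (use s0 s' s'1 vv xv in auto)
    then show ?thesis using x y by blast
  next
    case False
    then have "T (m-1-1)" using notT by blast
    then have T2: "T (m-2)" by (simp add: algebra_simps)
    obtain y where y: "y \<in> S" "y \<in> Ed (m-2)" "y \<noteq> W (m-2)" using pickT[OF T2] by blast
    obtain s' where s': "0 \<le> s'" "s' \<le> 1" "y = W (m-2) + of_real s' * (W (m-2+1) - W (m-2))" using param_ne[OF y(2)] by blast
    have s'0: "s' > 0" using s' y(3) by (cases "s' = 0") auto
    have e: "m - 2 + 1 = m - 1" by simp
    have "y \<noteq> v \<and> vec_angle (x - v) (y - v) > \<beta>"
      by (rule Ga[of 0 s s' v m x y]) (use s0 s' s'0 vv xv e in auto)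
    then show ?thesis using x y by blast
  qed
next
  case False
  have Tm1: "T (m-1)" using cnd[of "m-1"] False unfolding T_def by auto
  have Tp1: "T (m+1)" using notT[OF False] by simp
  obtain x where x: "x \<in> S" "x \<in> Ed (m-1)" "x \<noteq> v" using pickT[OF Tm1] by blast
  obtain s where s: "0 \<le> s" "s \<le> 1" "x = W (m-1) + of_real s * (W (m-1+1) - W (m-1))" using param_ne[OF x(2)] by blast
  have s1: "s < 1" using s x(3) vW by (cases "s = 1") auto
  have xv: "x - v = - of_real (1 - s) * (W (m-1+1) - W (m-1))" using s vW by (simp add: algebra_simps)
  have vv: "v = W (m-1+1) - of_real 0 * (W (m-1+1) - W (m-1))" using vW by simp
  obtain y where y: "y \<in> S" "y \<in> Ed (m+1)" "y \<noteq> W (m+2)" using pickT[OF Tp1] by blast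
  obtain s' where s': "0 \<le> s'" "s' \<le> 1" "y = W (m+1) + of_real s' * (W (m+1+1) - W (m+1))" using param_ne[OF y(2)] by blast
  have s'1: "s' < 1" using s' y(3) by (cases "s' = 1") (auto simp: algebra_simps)
  have yy: "y = W (m-1+2) + of_real s' * (W (m-1+3) - W (m-1+2))" using s' by (simp add: algebra_simps)
  have "y \<noteq> v \<and> vec_angle (x - v) (y - v) > \<beta>"
    by (rule Gc[of 0 "1-s" s' v "m-1" x y]) (use s1 s' s'1 vv xv yy in auto)
  then show ?thesis using x y by blast
qed


lemma Ed_split: "Ed j = Op j \<union> {W j, W (j+1)}"
  unfolding Ed_def Op_def open_segment_def by auto

lemma opn:
  assumes vS: "v \<in> S" and vO: "v \<in> Op k"
  shows "\<exists>x\<in>S. \<exists>y\<in>S. x \<noteq> v \<and> y \<noteq> v \<and> vec_angle (x - v) (y - v) > \<beta>"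
proof -
  have Tk: "T k" and O1: "S \<inter> Op (k+1) = {}" and O0: "S \<inter> Op (k-1) = {}"
    using cnd[of k] cnd[of "k-1"] vS vO unfolding T_def by auto
  have vE: "v \<in> Ed k" and vne: "v \<noteq> W k" "v \<noteq> W (k+1)"
    using vO unfolding Op_def Ed_def open_segment_def by auto
  obtain t where t: "0 \<le> t" "t \<le> 1" "v = W k + of_real t * (W (k+1) - W k)" using param_ne[OF vE] by blast
  have t0: "0 < t" "t < 1" using t vne by (cases "t = 0"; cases "t = 1"; auto)+
  obtain x where x: "x \<in> S" "x \<in> Ed k" "x \<noteq> v" using pickT[OF Tk] by blast
  obtain s where s: "0 \<le> s" "s \<le> 1" "x = W k + of_real s * (W (k+1) - W k)" using param_ne[OF x(2)] by blast
  have st: "s \<noteq> t" using s t x(3) by auto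
  have c2: "card (S \<inter> Ed k) = 2" using Tk unfolding T_def .
  have fE: "finite (S \<inter> Ed k)" using fin by simp
  have third: "w \<notin> S" if "w \<in> Ed k" "w \<noteq> v" "w \<noteq> x" for w
  proof
    assume "w \<in> S"
    then have "{w, v, x} \<subseteq> S \<inter> Ed k" using that vS vE x by auto
    then have "card {w, v, x} \<le> 2" using c2 fE card_mono by metis
    then show False using that x(3) by (simp add: card_insert_if)
  qed
  show ?thesis
  proof (cases "s > t")
    case True
    have xv: "x - v = of_real (s - t) * (W (k+1) - W k)" by (subst s(3), subst t(3)) (simp add: algebra_simps)
    have Wk: "W k \<notin> S"
    proof (rule third)
      show "W k \<in> Ed k" by (rule W_in_Ed)
      show "W k \<noteq> v" using vne by simp
      show "W k \<noteq> x" using s True t0 D0[of k] by auto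
    qed
    have "S \<inter> Ed (k-1) \<subseteq> {W (k-1)}" using Ed_split[of "k-1"] O0 Wk by auto
    then have "card (S \<inter> Ed (k-1)) \<le> 1" using card_mono[of "{W (k-1)}"] by fastforce
    then have "\<not> T (k-1)" unfolding T_def by simp
    then have "T (k-1-1)" using notT by blast
    then have T2: "T (k-2)" by (simp add: algebra_simps)
    obtain y where y: "y \<in> S" "y \<in> Ed (k-2)" "y \<noteq> W (k-2)" using pickT[OF T2] by blast
    obtain s' where s': "0 \<le> s'" "s' \<le> 1" "y = W (k-2) + of_real s' * (W (k-2+1) - W (k-2))" using param_ne[OF y(2)] by blast
    have s'0: "s' > 0" using s' y(3) by (cases "s' = 0") auto
    have e: "k - 2 + 1 = k - 1" by simp
    have "y \<noteq> v \<and> vec_angle (x - v) (y - v) > \<beta>"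
      by (rule Ga[of t "s - t" s' v k x y]) (use t True s' s'0 xv e in auto)
    then show ?thesis using x y by blast
  next
    case False
    then have st': "s < t" using st by simp
    have xv: "x - v = - of_real (t - s) * (W (k+1) - W k)" by (subst s(3), subst t(3)) (simp add: algebra_simps)
    have vv: "v = W (k+1) - of_real (1 - t) * (W (k+1) - W k)" by (subst t(3)) (simp add: algebra_simps)
    have Wk: "W (k+1) \<notin> S"
    proof (rule third)
      show "W (k+1) \<in> Ed k" by (rule W_in_Ed)
      show "W (k+1) \<noteq> v" using vne by simp
      show "W (k+1) \<noteq> x"
      proof
        assume "W (k+1) = x"
        then have "of_real (1 - s) * (W (k+1) - W k) = 0" using s by (simp add: algebra_simps)
        then show False using st' t0 D0[of k] by simp
      qed
    qed
    have "S \<inter> Ed (k+1) \<subseteq> {W (k+1+1)}" using Ed_split[of "k+1"] O1 Wk by auto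
    then have "card (S \<inter> Ed (k+1)) \<le> 1" using card_mono[of "{W (k+1+1)}"] by fastforce
    then have "\<not> T (k+1)" unfolding T_def by simp
    then have "T (k+1+1)" using notT by blast
    then have T2: "T (k+2)" by (simp add: algebra_simps)
    obtain y where y: "y \<in> S" "y \<in> Ed (k+2)" "y \<noteq> W (k+3)" using pickT[OF T2] by blast
    obtain s' where s': "0 \<le> s'" "s' \<le> 1" "y = W (k+2) + of_real s' * (W (k+2+1) - W (k+2))" using param_ne[OF y(2)] by blast
    have s'1: "s' < 1" using s' y(3) by (cases "s' = 1") (auto simp: algebra_simps)
    have yy: "y = W (k+2) + of_real s' * (W (k+3) - W (k+2))" using s' by (simp add: algebra_simps)
    have "y \<noteq> v \<and> vec_angle (x - v) (y - v) > \<beta>"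
      by (rule Gc[of "1-t" "t-s" s' v k x y]) (use t0 st' s' s'1 vv xv yy in auto)
    then show ?thesis using x y by blast
  qed
qed

lemma local_angle:
  assumes vS: "v \<in> S"
  shows "\<exists>x\<in>S. \<exists>y\<in>S. x \<noteq> v \<and> y \<noteq> v \<and> vec_angle (x - v) (y - v) > \<beta>"
proof -
  obtain i where i: "i < n" "v \<in> Ed (int i)" using S_bd vS by auto
  then consider "v \<in> Op (int i)" | "v = W (int i)" | "v = W (int i + 1)" using Ed_split by auto
  then show ?thesis using opn vtx vS by cases auto
qed

end



lemma side_gen:
  fixes a d1 d2 e :: complex
  assumes "a \<bullet> d1 = 0" "a \<bullet> d2 < 0" "a \<bullet> e \<le> 0" "d1 \<noteq> 0"
  shows "Im (e/d1) * Im (d2/d1) \<ge> 0"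
proof -
  define m where "m = cnj a * d1"
  have gen: "a \<bullet> f = - Im m * Im (f/d1)" for f
  proof -
    have "a \<bullet> f = Re (m * (f/d1))" unfolding m_def inner_cnj using assms(4) by simp
    also have "\<dots> = Re m * Re (f/d1) - Im m * Im (f/d1)" by (rule times_complex.sel(1))
    also have "Re m = 0" using assms(1) unfolding m_def inner_cnj .
    finally show ?thesis by simp
  qed
  have 1: "- Im m * Im (d2/d1) < 0" using assms(2) gen by simp
  have 2: "- Im m * Im (e/d1) \<le> 0" using assms(3) gen by simp
  have "(- Im m * Im (d2/d1)) * (- Im m * Im (e/d1)) \<ge> 0" using 1 2 by (simp add: mult_nonpos_nonpos)
  then have "(Im m)^2 * (Im (e/d1) * Im (d2/d1)) \<ge> 0" by (simp add: power2_eq_square algebra_simps)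
  moreover have "Im m \<noteq> 0" using 1 by auto
  ultimately show ?thesis by (simp add: zero_le_mult_iff)
qed

lemma cone_main:
  fixes K :: "complex set"
  assumes H1: "\<And>z. z \<in> K \<Longrightarrow> a \<bullet> z \<le> b" "a \<bullet> v = b" "a \<bullet> u = b" "a \<bullet> w < b"
    and H2: "\<And>z. z \<in> K \<Longrightarrow> a' \<bullet> z \<le> b'" "a' \<bullet> v = b'" "a' \<bullet> w = b'" "a' \<bullet> u < b'"
    and uv: "u \<noteq> v" and pos: "Im ((w - v) / (u - v)) > 0"
    and xK: "x \<in> K" "x \<noteq> v" and yK: "y \<in> K" "y \<noteq> v"
  shows "vec_angle (x - v) (y - v) \<le> vec_angle (u - v) (w - v)"
proof -
  define d1 where "d1 = u - v"
  define d2 where "d2 = w - v"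
  have d10: "d1 \<noteq> 0" using uv d1_def by simp
  have d20: "d2 \<noteq> 0" using pos d2_def by auto
  have ad1: "a \<bullet> d1 = 0" "a \<bullet> d2 < 0" using H1 unfolding d1_def d2_def by (auto simp: inner_diff_right)
  have bd: "a' \<bullet> d2 = 0" "a' \<bullet> d1 < 0" using H2 unfolding d1_def d2_def by (auto simp: inner_diff_right)
  have p: "Im (d2/d1) > 0" using pos d1_def d2_def by simp
  have neg: "Im (d1/d2) < 0"
  proof -
    define q where "q = d2/d1"
    have q0: "q \<noteq> 0" using d10 d20 q_def by simp
    have "d1/d2 = inverse q" unfolding q_def by simp
    then have "Im (d1/d2) = - Im q / ((Re q)^2 + (Im q)^2)" by (simp add: power2_eq_square)
    moreover have "(Re q)^2 + (Im q)^2 > 0" using q0 by (simp add: sum_power2_gt_zero_iff complex_eq_iff)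
    moreover have "Im q > 0" using p q_def by simp
    ultimately show ?thesis by (simp add: divide_pos_pos)
  qed
  have s1: "Im (e/d1) \<ge> 0" if "a \<bullet> e \<le> 0" for e
    using side_gen[OF ad1 that d10] p by (simp add: zero_le_mult_iff)
  have s2: "Im (e/d2) \<le> 0" if "a' \<bullet> e \<le> 0" for e
    using side_gen[OF bd that d20] neg by (auto simp: zero_le_mult_iff)
  have ex: "a \<bullet> (x - v) \<le> 0" "a' \<bullet> (x - v) \<le> 0" "a \<bullet> (y - v) \<le> 0" "a' \<bullet> (y - v) \<le> 0"
    using H1(1)[OF xK(1)] H1(2) H2(1)[OF xK(1)] H2(2) H1(1)[OF yK(1)] H2(1)[OF yK(1)]
    by (auto simp: inner_diff_right)
  show ?thesis unfolding d1_def[symmetric] d2_def[symmetric]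
    by (rule cone_angle[OF d10 p]) (use xK yK ex s1 s2 in auto)
qed

lemma vec_angle_sym: "vec_angle a b = vec_angle b a"
  unfolding vec_angle_def by (simp add: inner_commute mult.commute)

lemma face_sep:
  fixes K :: "complex set"
  assumes fu: "closed_segment v u face_of K" and fw: "closed_segment v w face_of K"
    and uv: "u \<noteq> v" "w \<noteq> v" "u \<noteq> w"
    and K: "K \<subseteq> {z. a \<bullet> z \<le> b}" and F: "closed_segment v u = K \<inter> {z. a \<bullet> z = b}"
  shows "a \<bullet> v = b" "a \<bullet> u = b" "a \<bullet> w < b"
proof -
  show "a \<bullet> v = b" "a \<bullet> u = b" using F by auto
  have wK: "w \<in> K" using face_of_imp_subset[OF fw] by auto
  have uK: "u \<in> K" "v \<in> K" using face_of_imp_subset[OF fu] by auto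
  show "a \<bullet> w < b"
  proof (rule ccontr)
    assume "\<not> a \<bullet> w < b"
    then have "a \<bullet> w = b" using K wK by force
    then have wu: "w \<in> closed_segment v u" using F wK by auto
    then have "w \<in> open_segment v u" using uv unfolding open_segment_def by auto
    then have "u \<in> closed_segment v w" using fw uK unfolding face_of_def by blast
    then have "closed_segment v u \<subseteq> closed_segment v w" "closed_segment v w \<subseteq> closed_segment v u"
      using wu by (auto simp: subset_closed_segment)
    then have "closed_segment v u = closed_segment v w" by auto
    then have "{v, u} = {v, w}" by simp
    then show False using uv by auto
  qed
qed




lemma Im_nonzero:
  fixes a u v w :: complex
  assumes "a \<bullet> v = b" "a \<bullet> u = b" "a \<bullet> w < b" "u \<noteq> v"
  shows "Im ((w - v) / (u - v)) \<noteq> 0"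
proof
  assume h: "Im ((w - v) / (u - v)) = 0"
  define r where "r = Re ((w - v) / (u - v))"
  have "(w - v) / (u - v) = of_real r" using h unfolding r_def by (simp add: complex_eq_iff)
  then have "w - v = r *\<^sub>R (u - v)" using assms(4) by (simp add: field_simps scaleR_conv_of_real)
  then have "a \<bullet> (w - v) = r * (a \<bullet> (u - v))" by simp
  then show False using assms by (simp add: inner_diff_right)
qed

theorem lemma5p10:
  fixes S :: "complex set" and n :: nat
  assumes "finite S" and "card S = n" and "n > 4"
    and "\<And>c r. is_SED S c r \<Longrightarrow> c \<notin> S"
    and "pre_regular S"
  shows "\<forall>v alpha. hull_internal_angle S v alpha \<longrightarrow> alpha > pi * (real n - 3) / real n"
proof -
  obtain c \<rho> \<theta> where rp: "\<rho> > 0" and P: "\<forall>k<n.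
      (card (S \<inter> reg_edge c \<rho> \<theta> n k) = 2 \<and> S \<inter> reg_edge_relint c \<rho> \<theta> n ((k + 1) mod n) = {}) \<or>
      (card (S \<inter> reg_edge c \<rho> \<theta> n ((k + 1) mod n)) = 2 \<and> S \<inter> reg_edge_relint c \<rho> \<theta> n k = {})"
    using assms(5) assms(2) unfolding pre_regular_def Let_def by blast
  interpret R: rpoly n c \<rho> \<theta> by unfold_locales (use assms(3) rp in auto)
  have RV: "reg_vertex c \<rho> \<theta> n k = R.W (int k)" for k
    unfolding reg_vertex_def R.W_def by simp
  have RV1: "reg_vertex c \<rho> \<theta> n ((k + 1) mod n) = R.W (int k + 1)" for k
  proof -
    have "reg_vertex c \<rho> \<theta> n ((k + 1) mod n) = R.W ((int k + 1) mod int n)"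
      unfolding RV by (simp add: of_nat_mod add.commute)
    then show ?thesis by (simp add: R.W_mod)
  qed
  have RV2: "R.W (int ((k + 1) mod n)) = R.W (int k + 1)" for k using RV1 RV by metis
  have RE: "reg_edge c \<rho> \<theta> n k = R.Ed (int k)" for k
    unfolding reg_edge_def R.Ed_def RV RV2 ..
  have RO: "reg_edge_relint c \<rho> \<theta> n k = R.Op (int k)" for k
    unfolding reg_edge_relint_def R.Op_def RV RV2 ..
  have Emod: "R.Ed (int ((k + 1) mod n)) = R.Ed (int k + 1)" "R.Op (int ((k + 1) mod n)) = R.Op (int k + 1)" for k
    by (simp_all add: of_nat_mod R.Ed_mod R.Op_mod add.commute)
  have cnd: "(card (S \<inter> R.Ed j) = 2 \<and> S \<inter> R.Op (j+1) = {}) \<or> (card (S \<inter> R.Ed (j+1)) = 2 \<and> S \<inter> R.Op j = {})" for j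
  proof -
    define k where "k = nat (j mod int n)"
    have k: "k < n" "int k = j mod int n" unfolding k_def using assms(3)
      by (auto simp: nat_less_iff)
    have e1: "R.Ed j = R.Ed (int k)" "R.Op j = R.Op (int k)" by (simp_all add: k R.Ed_mod R.Op_mod)
    have "(int k + 1) mod int n = (j + 1) mod int n" unfolding k by (simp add: mod_add_left_eq)
    then have e2: "R.Ed (j+1) = R.Ed (int k + 1)" "R.Op (j+1) = R.Op (int k + 1)"
      by (metis R.Ed_mod, metis R.Op_mod)
    show ?thesis using P k(1) unfolding e1 e2 RE RO Emod by auto
  qed
  interpret Q: prereg n c \<rho> \<theta> S by unfold_locales (use assms cnd in auto)
  show ?thesis
  proof (intro allI impI)
    fix v alpha assume "hull_internal_angle S v alpha"
    then obtain u w where ext: "v extreme_point_of (convex hull S)" and uvw: "u \<noteq> v" "w \<noteq> v" "u \<noteq> w"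
      and fu: "closed_segment v u face_of (convex hull S)" and fw: "closed_segment v w face_of (convex hull S)"
      and al: "alpha = vec_angle (u - v) (w - v)"
      unfolding hull_internal_angle_def by blast
    have vS: "v \<in> S" using extreme_point_of_convex_hull[OF ext] .
    obtain x y where xy: "x \<in> S" "y \<in> S" "x \<noteq> v" "y \<noteq> v" and big: "vec_angle (x - v) (y - v) > R.\<beta>"
      using Q.local_angle[OF vS] by blast
    define K where "K = convex hull S"
    have poly: "polyhedron K" unfolding K_def
      by (rule polytope_imp_polyhedron[OF polytope_convex_hull[OF assms(1)]])
    obtain a b where ab: "K \<subseteq> {z. a \<bullet> z \<le> b}" "closed_segment v u = K \<inter> {z. a \<bullet> z = b}"
      using fu exposed_face_of_polyhedron[OF poly] unfolding K_def[symmetric] exposed_face_of_def by blast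
    obtain a' b' where ab': "K \<subseteq> {z. a' \<bullet> z \<le> b'}" "closed_segment v w = K \<inter> {z. a' \<bullet> z = b'}"
      using fw exposed_face_of_polyhedron[OF poly] unfolding K_def[symmetric] exposed_face_of_def by blast
    have s1: "a \<bullet> v = b" "a \<bullet> u = b" "a \<bullet> w < b"
      using face_sep[OF fu[folded K_def] fw[folded K_def] uvw ab] .
    have s2: "a' \<bullet> v = b'" "a' \<bullet> w = b'" "a' \<bullet> u < b'"
      using face_sep[OF fw[folded K_def] fu[folded K_def] uvw(2,1) uvw(3)[symmetric] ab'] .
    have xK: "x \<in> K" "y \<in> K" using xy hull_subset[of S convex] unfolding K_def by auto
    have h1: "\<And>z. z \<in> K \<Longrightarrow> a \<bullet> z \<le> b" using ab(1) by auto
    have h2: "\<And>z. z \<in> K \<Longrightarrow> a' \<bullet> z \<le> b'" using ab'(1) by auto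
    have ne: "Im ((w - v) / (u - v)) \<noteq> 0" using Im_nonzero[OF s1 uvw(1)] .
    have "vec_angle (x - v) (y - v) \<le> vec_angle (u - v) (w - v)"
    proof (cases "Im ((w - v) / (u - v)) > 0")
      case True
      show ?thesis by (rule cone_main[OF h1 s1 h2 s2 uvw(1) True xK(1) xy(3) xK(2) xy(4)])
    next
      case False
      then have neg: "Im ((w - v) / (u - v)) < 0" using ne by simp
      have "Im ((u - v) / (w - v)) > 0"
      proof -
        define q where "q = (w - v) / (u - v)"
        have q0: "q \<noteq> 0" using neg q_def by auto
        have "(u - v) / (w - v) = inverse q" unfolding q_def by simp
        then have "Im ((u - v) / (w - v)) = - Im q / ((Re q)^2 + (Im q)^2)" by (simp add: power2_eq_square)
        moreover have "(Re q)^2 + (Im q)^2 > 0" using q0 by (simp add: sum_power2_gt_zero_iff complex_eq_iff)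
        ultimately show ?thesis using neg q_def by (simp add: divide_neg_pos)
      qed
      then have "vec_angle (x - v) (y - v) \<le> vec_angle (w - v) (u - v)"
        using cone_main[of K a' b' v w u a b x y] h2 s2 h1 s1 uvw(2) xK xy by blast
      then show ?thesis by (simp add: vec_angle_sym)
    qed
    then show "alpha > pi * (real n - 3) / real n" using big al unfolding R.\<beta>_def by simp
  qed
qed



end
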